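(* Let $(X,d)$ be a pointed metric space, let $((x_i,y_i))_{i\in I}$ be a Lipschitz interpolating family in $\widetilde X$ for $\mathrm{Lip}_0(X)$ with Lipschitz interpolation constant $M$, and let $(f_i)_{i\in I}$ be a Beurling set of functions in $\mathrm{Lip}_0(X)$ for $((x_i,y_i))_{i\in I}$. Then the bounded linear operator $R:\ell_\infty(I)\to\mathrm{Lip}_0(X)$, $R(\alpha)=\sum_{i\in I}\alpha_i f_i$ for $\alpha=(\alpha_i)_{i\in I}\in\ell_\infty(I)$, is weak*-to-weak* continuous, where $\ell_\infty(I)=\ell_1(I)^*$ and $\mathrm{Lip}_0(X)=\mathcal F(X)^*$.
   Context: All spaces are real. $(X,d)$ is a metric space with base point $0$, $\widetilde{X}=\{(x,y)\in X\times X: x\neq y\}$. $\mathrm{Lip}_0(X)$ is the Banach space of Lipschitz $f:X\to\mathbb{R}$ with $f(0)=0$, normed by $\|f\|=\sup_{(x,y)\in\widetilde X}|f(x)-f(y)|/d(x,y)$. For $x\in X$, $\delta_x\in\mathrm{Lip}_0(X)^*$ is $\delta_x(f)=f(x)$; the Lipschitz-free space $\mathcal F(X)$ is the closed linear span of $\{\delta_x\}$ in $\mathrm{Lip}_0(X)^*$, and $\mathrm{Lip}_0(X)$ is identified isometrically with $\mathcal F(X)^*$ via $f\mapsto(\gamma\mapsto\gamma(f))$; the weak* topology on $\mathrm{Lip}_0(X)$ is the one induced by this duality. For a family $((x_i,y_i))_{i\in I}$ in $\widetilde X$, its Lipschitz interpolating operator is $T:\mathrm{Lip}_0(X)\to\ell_\infty(I)$,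 $T(f)=\big((f(x_i)-f(y_i))/d(x_i,y_i)\big)_{i\in I}$; the family is Lipschitz interpolating for $\mathrm{Lip}_0(X)$ if $T$ is surjective, and then its Lipschitz interpolation constant is $M=\inf\{K\geq 1: \forall \alpha\in\ell_\infty(I), \|\alpha\|_\infty\le1,\ \exists f\in\mathrm{Lip}_0(X),\ \|f\|\le K,\ T(f)=\alpha\}$. A Beurling set of functions in $\mathrm{Lip}_0(X)$ for such a family is a family $(f_i)_{i\in I}$ of functions $f_i:X\to\mathbb R$ with $f_i(0)=0$, $(f_i(x_j)-f_i(y_j))/d(x_j,y_j)=\delta_{ij}$ for all $i,j\in I$, and $\sup_{(x,y)\in\widetilde X}\sum_{i\in I}|f_i(x)-f_i(y)|/d(x,y)\leq M$. (For such a set, $R$ above is a well-defined bounded linear operator into $\mathrm{Lip}_0(X)$.) *)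

theory Defs
  imports "HOL-Analysis.Analysis"
begin

text \<open>The pointed metric space is a type of class metric_space with base point z.
  Lip_0(X) is represented as a set of real-valued functions on the type.\<close>

definition Lip0 :: "'a::metric_space \<Rightarrow> ('a \<Rightarrow> real) set" where
  "Lip0 z = {f. f z = 0 \<and> (\<exists>L. \<forall>x y. \<bar>f x - f y\<bar> \<le> L * dist x y)}"

text \<open>Lipschitz norm (the sup over pairs x ~= y; 0 is added so that it is well-defined
  for a one-point space, which does not change the value since the quotients are >= 0).\<close>
definition lipnorm :: "('a::metric_space \<Rightarrow> real) \<Rightarrow> real" where
  "lipnorm f = Sup ({\<bar>f x - f y\<bar> / dist x y | x y. x \<noteq> y} \<union> {0})"

text \<open>The Lipschitz-free space: the norm closure in Lip_0(X)^* of the span of the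
  evaluation functionals delta_x. A functional phi (only its values on Lip0 matter)
  belongs to it iff it is a norm limit of finite linear combinations of deltas.\<close>
definition free_space :: "'a::metric_space \<Rightarrow> (('a \<Rightarrow> real) \<Rightarrow> real) set" where
  "free_space z = {\<phi>. \<forall>e>0. \<exists>S c. finite S \<and>
      (\<forall>f\<in>Lip0 z. \<bar>\<phi> f - (\<Sum>x\<in>S. c x * f x)\<bar> \<le> e * lipnorm f)}"

definition weakstar_Lip0 :: "'a::metric_space \<Rightarrow> ('a \<Rightarrow> real) topology" where
  "weakstar_Lip0 z = topology_generated_by
     {{f \<in> Lip0 z. \<phi> f \<in> U} | \<phi> U. \<phi> \<in> free_space z \<and> open U}"

definition linf :: "'i set \<Rightarrow> ('i \<Rightarrow> real) set" where
  "linf I = {\<alpha>. (\<exists>B. \<forall>i\<in>I. \<bar>\<alpha> i\<bar> \<le> B) \<and> (\<forall>i. i \<notin> I \<longrightarrow> \<alpha> i = 0)}"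

definition l1 :: "'i set \<Rightarrow> ('i \<Rightarrow> real) set" where
  "l1 I = {\<beta>. (\<lambda>i. \<bar>\<beta> i\<bar>) summable_on I \<and> (\<forall>i. i \<notin> I \<longrightarrow> \<beta> i = 0)}"

definition weakstar_linf :: "'i set \<Rightarrow> ('i \<Rightarrow> real) topology" where
  "weakstar_linf I = topology_generated_by
     {{\<alpha> \<in> linf I. (\<Sum>\<^sub>\<infinity>i\<in>I. \<alpha> i * \<beta> i) \<in> U} | \<beta> U. \<beta> \<in> l1 I \<and> open U}"

definition lip_interpolating ::
    "'a::metric_space \<Rightarrow> 'i set \<Rightarrow> ('i \<Rightarrow> 'a) \<Rightarrow> ('i \<Rightarrow> 'a) \<Rightarrow> bool" where
  "lip_interpolating z I xs ys \<longleftrightarrow> (\<forall>i\<in>I. xs i \<noteq> ys i) \<and>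
     (\<forall>\<alpha>\<in>linf I. \<exists>f\<in>Lip0 z. \<forall>i\<in>I. (f (xs i) - f (ys i)) / dist (xs i) (ys i) = \<alpha> i)"

definition lip_interp_const ::
    "'a::metric_space \<Rightarrow> 'i set \<Rightarrow> ('i \<Rightarrow> 'a) \<Rightarrow> ('i \<Rightarrow> 'a) \<Rightarrow> real" where
  "lip_interp_const z I xs ys = Inf {K. K \<ge> 1 \<and>
     (\<forall>\<alpha>\<in>linf I. (\<forall>i\<in>I. \<bar>\<alpha> i\<bar> \<le> 1) \<longrightarrow>
        (\<exists>f\<in>Lip0 z. lipnorm f \<le> K \<and>
           (\<forall>i\<in>I. (f (xs i) - f (ys i)) / dist (xs i) (ys i) = \<alpha> i)))}"

definition beurling_set ::
    "'a::metric_space \<Rightarrow> 'i set \<Rightarrow> ('i \<Rightarrow> 'a) \<Rightarrow> ('i \<Rightarrow> 'a) \<Rightarrow> real \<Rightarrow> ('i \<Rightarrow> 'a \<Rightarrow> real) \<Rightarrow> bool" where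
  "beurling_set z I xs ys M fs \<longleftrightarrow>
     (\<forall>i\<in>I. fs i z = 0) \<and>
     (\<forall>i\<in>I. \<forall>j\<in>I. (fs i (xs j) - fs i (ys j)) / dist (xs j) (ys j) = (if i = j then 1 else 0)) \<and>
     (\<forall>x y. x \<noteq> y \<longrightarrow> (\<lambda>i. \<bar>fs i x - fs i y\<bar>) summable_on I \<and>
        (\<Sum>\<^sub>\<infinity>i\<in>I. \<bar>fs i x - fs i y\<bar>) / dist x y \<le> M)"

definition beurling_op :: "'i set \<Rightarrow> ('i \<Rightarrow> 'a \<Rightarrow> real) \<Rightarrow> ('i \<Rightarrow> real) \<Rightarrow> 'a \<Rightarrow> real" where
  "beurling_op I fs \<alpha> = (\<lambda>x. \<Sum>\<^sub>\<infinity>i\<in>I. \<alpha> i * fs i x)"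

end

theory Submission
  imports Defs
begin


lemma zero_by_eps:
  fixes D K :: real
  assumes "\<And>e. e > 0 \<Longrightarrow> \<bar>D\<bar> \<le> e * K" "K \<ge> 0"
  shows "D = 0"
proof (rule ccontr)
  assume "D \<noteq> 0"
  define e where "e = \<bar>D\<bar> / (2 * (K + 1))"
  have e: "e > 0" using \<open>D \<noteq> 0\<close> assms(2) by (simp add: e_def)
  have "e * K < \<bar>D\<bar>"
  proof -
    have "e * K \<le> e * (K + 1)" using e by simp
    also have "e * (K + 1) = \<bar>D\<bar> / 2" using assms(2) by (simp add: e_def field_simps)
    also have "\<dots> < \<bar>D\<bar>" using \<open>D \<noteq> 0\<close> by simp
    finally show ?thesis .
  qed
  with assms(1)[OF e] show False by simp
qed

lemma lip_bound:
  assumes "f \<in> Lip0 z"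
  shows "\<bar>f x - f y\<bar> \<le> lipnorm f * dist x y" and "lipnorm f \<ge> 0"
proof -
  obtain L where L: "\<And>x y. \<bar>f x - f y\<bar> \<le> L * dist x y"
    using assms unfolding Lip0_def by auto
  let ?A = "{\<bar>f x - f y\<bar> / dist x y | x y. x \<noteq> y} \<union> {0}"
  have bdd: "bdd_above ?A"
  proof (rule bdd_aboveI[of _ "max L 0"])
    fix t assume "t \<in> ?A"
    then show "t \<le> max L 0"
    proof
      assume "t \<in> {\<bar>f x - f y\<bar> / dist x y | x y. x \<noteq> y}"
      then obtain x y where xy: "x \<noteq> y" "t = \<bar>f x - f y\<bar> / dist x y" by auto
      have d: "dist x y > 0" using xy by simp
      have "\<bar>f x - f y\<bar> \<le> max L 0 * dist x y"
        using L[of x y] mult_right_mono[of L "max L 0" "dist x y"] d by linarith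
      then show ?thesis using xy d by (simp add: pos_divide_le_eq)
    qed auto
  qed
  show nn: "lipnorm f \<ge> 0" unfolding lipnorm_def by (rule cSup_upper[OF _ bdd]) auto
  show "\<bar>f x - f y\<bar> \<le> lipnorm f * dist x y"
  proof (cases "x = y")
    case True then show ?thesis by simp
  next
    case False
    have "\<bar>f x - f y\<bar> / dist x y \<le> lipnorm f"
      unfolding lipnorm_def by (rule cSup_upper[OF _ bdd]) (use False in auto)
    with False show ?thesis by (simp add: divide_le_eq mult.commute)
  qed
qed

lemma lipnorm_le:
  assumes "\<And>x y. \<bar>f x - f y\<bar> \<le> L * dist x y" "L \<ge> 0"
  shows "lipnorm f \<le> L"
  unfolding lipnorm_def
proof (rule cSup_least)
  fix t assume "t \<in> {\<bar>f x - f y\<bar> / dist x y | x y. x \<noteq> y} \<union> {0}"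
  then show "t \<le> L"
  proof
    assume "t \<in> {\<bar>f x - f y\<bar> / dist x y | x y. x \<noteq> y}"
    then obtain x y where "x \<noteq> y" "t = \<bar>f x - f y\<bar> / dist x y" by auto
    moreover have "\<bar>f x - f y\<bar> \<le> L * dist x y" by (rule assms)
    ultimately show ?thesis by (simp add: divide_le_eq)
  qed (use assms in auto)
qed auto

lemma free_bounded:
  assumes "\<phi> \<in> free_space z"
  shows "\<exists>C\<ge>0. \<forall>f\<in>Lip0 z. \<bar>\<phi> f\<bar> \<le> C * lipnorm f"
proof -
  obtain S c where S: "finite S"
    "\<And>f. f \<in> Lip0 z \<Longrightarrow> \<bar>\<phi> f - (\<Sum>x\<in>S. c x * f x)\<bar> \<le> 1 * lipnorm f"
  proof -
    have "\<exists>S c. finite S \<and> (\<forall>f\<in>Lip0 z. \<bar>\<phi> f - (\<Sum>x\<in>S. c x * f x)\<bar> \<le> 1 * lipnorm f)"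
      using assms unfolding free_space_def mem_Collect_eq
      by (erule_tac x=1 in allE) (erule impE, rule zero_less_one, assumption)
    then show ?thesis using that by blast
  qed
  define C where "C = 1 + (\<Sum>x\<in>S. \<bar>c x\<bar> * dist x z)"
  have "C \<ge> 0" unfolding C_def by (simp add: sum_nonneg)
  moreover have "\<bar>\<phi> f\<bar> \<le> C * lipnorm f" if f: "f \<in> Lip0 z" for f
  proof -
    have fz: "f z = 0" using f by (simp add: Lip0_def)
    have "\<bar>\<Sum>x\<in>S. c x * f x\<bar> \<le> (\<Sum>x\<in>S. \<bar>c x\<bar> * dist x z) * lipnorm f"
    proof -
      have "\<bar>\<Sum>x\<in>S. c x * f x\<bar> \<le> (\<Sum>x\<in>S. \<bar>c x * f x\<bar>)" by (rule sum_abs)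
      also have "\<dots> \<le> (\<Sum>x\<in>S. \<bar>c x\<bar> * dist x z * lipnorm f)"
      proof (rule sum_mono)
        fix x assume "x \<in> S"
        have "\<bar>f x\<bar> \<le> lipnorm f * dist x z" using lip_bound(1)[OF f, of x z] fz by simp
        then have "\<bar>c x\<bar> * \<bar>f x\<bar> \<le> \<bar>c x\<bar> * (lipnorm f * dist x z)"
          by (rule mult_left_mono) simp
        then show "\<bar>c x * f x\<bar> \<le> \<bar>c x\<bar> * dist x z * lipnorm f"
          by (simp add: abs_mult mult_ac)
      qed
      also have "\<dots> = (\<Sum>x\<in>S. \<bar>c x\<bar> * dist x z) * lipnorm f" by (simp add: sum_distrib_right)
      finally show ?thesis .
    qed
    with S(2)[OF f] show ?thesis unfolding C_def by (simp add: algebra_simps)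
  qed
  ultimately show ?thesis by blast
qed

lemma free_linear:
  assumes "\<phi> \<in> free_space z" "finite F" "\<And>i. i \<in> F \<Longrightarrow> g i \<in> Lip0 z"
    "(\<lambda>x. \<Sum>i\<in>F. a i * g i x) \<in> Lip0 z"
  shows "\<phi> (\<lambda>x. \<Sum>i\<in>F. a i * g i x) = (\<Sum>i\<in>F. a i * \<phi> (g i))"
proof -
  define G where "G = (\<lambda>x. \<Sum>i\<in>F. a i * g i x)"
  define K where "K = lipnorm G + (\<Sum>i\<in>F. \<bar>a i\<bar> * lipnorm (g i))"
  have K: "K \<ge> 0" unfolding K_def G_def
    using lip_bound(2)[OF assms(4)] lip_bound(2)[OF assms(3)]
    by (simp add: sum_nonneg)
  have "\<phi> G - (\<Sum>i\<in>F. a i * \<phi> (g i)) = 0"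
  proof (rule zero_by_eps[OF _ K])
    fix e :: real assume e: "e > 0"
    obtain S c where S: "finite S"
      "\<And>f. f \<in> Lip0 z \<Longrightarrow> \<bar>\<phi> f - (\<Sum>x\<in>S. c x * f x)\<bar> \<le> e * lipnorm f"
      using assms(1) e unfolding free_space_def by blast
    have swap: "(\<Sum>x\<in>S. c x * G x) = (\<Sum>i\<in>F. a i * (\<Sum>x\<in>S. c x * g i x))"
    proof -
      have "(\<Sum>x\<in>S. c x * G x) = (\<Sum>x\<in>S. \<Sum>i\<in>F. a i * (c x * g i x))"
        by (simp add: G_def sum_distrib_left mult.left_commute)
      also have "\<dots> = (\<Sum>i\<in>F. \<Sum>x\<in>S. a i * (c x * g i x))" by (rule sum.swap)
      also have "\<dots> = (\<Sum>i\<in>F. a i * (\<Sum>x\<in>S. c x * g i x))" by (simp add: sum_distrib_left)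
      finally show ?thesis .
    qed
    have "\<phi> G - (\<Sum>i\<in>F. a i * \<phi> (g i)) =
        (\<phi> G - (\<Sum>x\<in>S. c x * G x)) + (\<Sum>i\<in>F. a i * ((\<Sum>x\<in>S. c x * g i x) - \<phi> (g i)))"
      unfolding swap by (simp add: right_diff_distrib sum_subtractf)
    also have "\<bar>\<dots>\<bar> \<le> e * lipnorm G + (\<Sum>i\<in>F. \<bar>a i\<bar> * (e * lipnorm (g i)))"
    proof (rule order_trans[OF abs_triangle_ineq add_mono])
      show "\<bar>\<phi> G - (\<Sum>x\<in>S. c x * G x)\<bar> \<le> e * lipnorm G"
        using S(2) assms(4) unfolding G_def by blast
      have "\<bar>\<Sum>i\<in>F. a i * ((\<Sum>x\<in>S. c x * g i x) - \<phi> (g i))\<bar>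
          \<le> (\<Sum>i\<in>F. \<bar>a i * ((\<Sum>x\<in>S. c x * g i x) - \<phi> (g i))\<bar>)" by (rule sum_abs)
      also have "\<dots> \<le> (\<Sum>i\<in>F. \<bar>a i\<bar> * (e * lipnorm (g i)))"
      proof (rule sum_mono)
        fix i assume "i \<in> F"
        have "\<bar>\<phi> (g i) - (\<Sum>x\<in>S. c x * g i x)\<bar> \<le> e * lipnorm (g i)"
          using S(2) assms(3)[OF \<open>i \<in> F\<close>] by blast
        then show "\<bar>a i * ((\<Sum>x\<in>S. c x * g i x) - \<phi> (g i))\<bar> \<le> \<bar>a i\<bar> * (e * lipnorm (g i))"
          by (simp add: abs_mult abs_minus_commute mult_left_mono)
      qed
      finally show "\<bar>\<Sum>i\<in>F. a i * ((\<Sum>x\<in>S. c x * g i x) - \<phi> (g i))\<bar>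
          \<le> (\<Sum>i\<in>F. \<bar>a i\<bar> * (e * lipnorm (g i)))" .
    qed
    also have "\<dots> = e * K" unfolding K_def
      by (simp add: algebra_simps sum_distrib_left)
    finally show "\<bar>\<phi> G - (\<Sum>i\<in>F. a i * \<phi> (g i))\<bar> \<le> e * K" .
  qed
  then show ?thesis unfolding G_def by simp
qed

lemma infsum_diff_real:
  fixes f g :: "'i \<Rightarrow> real"
  assumes "f summable_on A" "g summable_on A"
  shows "(\<lambda>i. f i - g i) summable_on A" "infsum (\<lambda>i. f i - g i) A = infsum f A - infsum g A"
proof -
  have g': "(\<lambda>i. - g i) summable_on A" using summable_on_uminus assms(2) by blast
  show "(\<lambda>i. f i - g i) summable_on A" using summable_on_add[OF assms(1) g'] by simp
  show "infsum (\<lambda>i. f i - g i) A = infsum f A - infsum g A"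
    using infsum_add[OF assms(1) g'] infsum_uminus[of g A] by simp
qed

lemma infsum_sum_swap:
  fixes h :: "'x \<Rightarrow> 'i \<Rightarrow> real"
  assumes "finite S" "\<And>x. x \<in> S \<Longrightarrow> h x summable_on A"
  shows "(\<lambda>i. \<Sum>x\<in>S. h x i) summable_on A \<and> infsum (\<lambda>i. \<Sum>x\<in>S. h x i) A = (\<Sum>x\<in>S. infsum (h x) A)"
  using assms
proof (induction S rule: finite_induct)
  case empty then show ?case by simp
next
  case (insert y S)
  then have IH: "(\<lambda>i. \<Sum>x\<in>S. h x i) summable_on A"
      "infsum (\<lambda>i. \<Sum>x\<in>S. h x i) A = (\<Sum>x\<in>S. infsum (h x) A)" by auto
  have hy: "h y summable_on A" using insert by auto
  show ?case using insert(1,2) summable_on_add[OF hy IH(1)] infsum_add[OF hy IH(1)] IH(2)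
    by simp
qed

lemma abs_summable_real: "(\<lambda>i. \<bar>f i\<bar>) summable_on A \<longleftrightarrow> (f::'i \<Rightarrow> real) summable_on A"
  using summable_on_iff_abs_summable_on_real[of f A] by simp

lemma bdd_mult_summable:
  fixes g \<alpha> :: "'i \<Rightarrow> real"
  assumes "g summable_on A" "\<And>i. i \<in> A \<Longrightarrow> \<bar>\<alpha> i\<bar> \<le> B"
  shows "(\<lambda>i. \<alpha> i * g i) summable_on A"
proof -
  have "(\<lambda>i. \<bar>g i\<bar>) summable_on A" using assms(1) by (simp add: abs_summable_real)
  then have a: "(\<lambda>i. B * \<bar>g i\<bar>) summable_on A" by (rule summable_on_cmult_right)
  have "(\<lambda>i. \<bar>\<alpha> i * g i\<bar>) summable_on A"
  proof (rule summable_on_comparison_test[OF a])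
    fix i assume "i \<in> A"
    then have "\<bar>\<alpha> i\<bar> * \<bar>g i\<bar> \<le> B * \<bar>g i\<bar>" using assms(2) by (simp add: mult_right_mono)
    then show "\<bar>\<alpha> i * g i\<bar> \<le> B * \<bar>g i\<bar>" by (simp add: abs_mult)
  qed simp
  then show ?thesis using abs_summable_real by blast
qed

lemma abs_infsum_mult_le:
  fixes g \<alpha> :: "'i \<Rightarrow> real"
  assumes "g summable_on A" "\<And>i. i \<in> A \<Longrightarrow> \<bar>\<alpha> i\<bar> \<le> B"
  shows "\<bar>infsum (\<lambda>i. \<alpha> i * g i) A\<bar> \<le> B * infsum (\<lambda>i. \<bar>g i\<bar>) A"
proof -
  have s: "(\<lambda>i. \<alpha> i * g i) summable_on A" by (rule bdd_mult_summable[OF assms])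
  have ga: "(\<lambda>i. \<bar>g i\<bar>) summable_on A"
    using assms(1) by (simp add: abs_summable_real)
  have "\<bar>infsum (\<lambda>i. \<alpha> i * g i) A\<bar> \<le> infsum (\<lambda>i. norm (\<alpha> i * g i)) A"
  proof -
    have sa: "(\<lambda>i. \<bar>\<alpha> i * g i\<bar>) summable_on A"
      using s by (simp add: abs_summable_real)
    then show ?thesis using norm_infsum_bound[of "\<lambda>i. \<alpha> i * g i" A] by simp
  qed
  also have "\<dots> \<le> infsum (\<lambda>i. B * \<bar>g i\<bar>) A"
  proof (rule infsum_mono)
    show "(\<lambda>i. norm (\<alpha> i * g i)) summable_on A"
      using s by (simp add: abs_summable_real)
    show "(\<lambda>i. B * \<bar>g i\<bar>) summable_on A" using ga by (rule summable_on_cmult_right)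
    fix i assume "i \<in> A"
    then show "norm (\<alpha> i * g i) \<le> B * \<bar>g i\<bar>" using assms(2)
      by (simp add: abs_mult mult_right_mono)
  qed
  also have "\<dots> = B * infsum (\<lambda>i. \<bar>g i\<bar>) A" using ga by (simp add: infsum_cmult_right)
  finally show ?thesis .
qed

lemma continuous_map_generated:
  assumes "\<And>x. x \<in> topspace X \<Longrightarrow> f x \<in> \<Union>S"
    "\<And>s. s \<in> S \<Longrightarrow> openin X {x \<in> topspace X. f x \<in> s}"
  shows "continuous_map X (topology_generated_by S) f"
  unfolding continuous_map_def
proof (intro conjI allI impI)
  show "f \<in> topspace X \<rightarrow> topspace (topology_generated_by S)" using assms(1) by auto
  fix U assume "openin (topology_generated_by S) U"
  then have "generate_topology_on S U" by (rule openin_topology_generated_by)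
  then show "openin X {x \<in> topspace X. f x \<in> U}"
  proof induction
    case Empty then show ?case by simp
  next
    case (Int a b)
    have "{x \<in> topspace X. f x \<in> a \<inter> b} = {x \<in> topspace X. f x \<in> a} \<inter> {x \<in> topspace X. f x \<in> b}" by auto
    then show ?case using Int by auto
  next
    case (UN K)
    have "{x \<in> topspace X. f x \<in> \<Union>K} = (\<Union>k\<in>K. {x \<in> topspace X. f x \<in> k})" by auto
    then show ?case using UN by auto
  next
    case (Basis s) then show ?case using assms(2) by auto
  qed
qed


lemma sgn_abs_real: "sgn (x::real) * x = \<bar>x\<bar>" "\<bar>sgn (x::real)\<bar> \<le> 1"
  by (auto simp: sgn_if)

locale beur =
  fixes z :: "'a::metric_space" and I :: "'i set" and fs :: "'i \<Rightarrow> 'a \<Rightarrow> real" and M :: real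
  assumes fz: "\<And>i. i \<in> I \<Longrightarrow> fs i z = 0"
    and fsum: "\<And>x y. x \<noteq> y \<Longrightarrow> (\<lambda>i. \<bar>fs i x - fs i y\<bar>) summable_on I \<and>
        infsum (\<lambda>i. \<bar>fs i x - fs i y\<bar>) I / dist x y \<le> M"
begin

lemma dsum: "(\<lambda>i. \<bar>fs i x - fs i y\<bar>) summable_on I"
  "infsum (\<lambda>i. \<bar>fs i x - fs i y\<bar>) I \<le> max M 0 * dist x y"
proof -
  show "(\<lambda>i. \<bar>fs i x - fs i y\<bar>) summable_on I"
    using fsum[of x y] by (cases "x = y") auto
  show "infsum (\<lambda>i. \<bar>fs i x - fs i y\<bar>) I \<le> max M 0 * dist x y"
  proof (cases "x = y")
    case False
    then have "infsum (\<lambda>i. \<bar>fs i x - fs i y\<bar>) I \<le> M * dist x y"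
      using fsum[of x y] by (simp add: divide_le_eq)
    also have "\<dots> \<le> max M 0 * dist x y" by (simp add: mult_right_mono)
    finally show ?thesis .
  qed simp
qed

lemma fsumm: "(\<lambda>i. fs i x) summable_on I"
proof -
  have "(\<lambda>i. \<bar>fs i x - fs i z\<bar>) summable_on I" by (rule dsum)
  then have "(\<lambda>i. \<bar>fs i x\<bar>) summable_on I"
    using summable_on_cong[of I "\<lambda>i. \<bar>fs i x - fs i z\<bar>" "\<lambda>i. \<bar>fs i x\<bar>"] fz by simp
  then show ?thesis using abs_summable_real by auto
qed

lemma diff_summ: "(\<lambda>i. fs i x - fs i y) summable_on I"
  using dsum(1)[of x y] by (simp add: abs_summable_real)

lemma R_props:
  assumes "\<And>i. i \<in> I \<Longrightarrow> \<bar>\<alpha> i\<bar> \<le> B" "B \<ge> 0"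
  shows "beurling_op I fs \<alpha> \<in> Lip0 z" "lipnorm (beurling_op I fs \<alpha>) \<le> B * max M 0"
proof -
  have key: "\<bar>beurling_op I fs \<alpha> x - beurling_op I fs \<alpha> y\<bar> \<le> (B * max M 0) * dist x y" for x y
  proof -
    have "beurling_op I fs \<alpha> x - beurling_op I fs \<alpha> y
        = infsum (\<lambda>i. \<alpha> i * fs i x - \<alpha> i * fs i y) I"
      unfolding beurling_op_def
      using infsum_diff_real(2)[OF bdd_mult_summable[OF fsumm assms(1)] bdd_mult_summable[OF fsumm assms(1)]]
      by simp
    also have "\<dots> = infsum (\<lambda>i. \<alpha> i * (fs i x - fs i y)) I" by (simp add: right_diff_distrib)
    finally have eq: "beurling_op I fs \<alpha> x - beurling_op I fs \<alpha> y = infsum (\<lambda>i. \<alpha> i * (fs i x - fs i y)) I" .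
    have "\<bar>infsum (\<lambda>i. \<alpha> i * (fs i x - fs i y)) I\<bar> \<le> B * infsum (\<lambda>i. \<bar>fs i x - fs i y\<bar>) I"
      by (rule abs_infsum_mult_le[OF diff_summ assms(1)])
    also have "\<dots> \<le> B * (max M 0 * dist x y)" by (rule mult_left_mono[OF dsum(2) assms(2)])
    finally show ?thesis using eq by simp
  qed
  have "beurling_op I fs \<alpha> z = 0"
  proof -
    have "(\<Sum>\<^sub>\<infinity>i\<in>I. \<alpha> i * fs i z) = (\<Sum>\<^sub>\<infinity>i\<in>I. (0::real))" by (rule infsum_cong) (simp add: fz)
    then show ?thesis unfolding beurling_op_def by simp
  qed
  then show "beurling_op I fs \<alpha> \<in> Lip0 z" unfolding Lip0_def using key by blast
  show "lipnorm (beurling_op I fs \<alpha>) \<le> B * max M 0"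
    by (rule lipnorm_le[OF key]) (use assms(2) in simp)
qed

lemma R_fin:
  assumes "finite F" "F \<subseteq> I"
  shows "beurling_op I fs (\<lambda>i. if i \<in> F then a i else 0) = (\<lambda>x. \<Sum>i\<in>F. a i * fs i x)"
proof
  fix x
  have "(\<Sum>\<^sub>\<infinity>i\<in>I. (if i \<in> F then a i else 0) * fs i x) = (\<Sum>\<^sub>\<infinity>i\<in>F. a i * fs i x)"
    by (rule infsum_cong_neutral) (use assms in auto)
  then show "beurling_op I fs (\<lambda>i. if i \<in> F then a i else 0) x = (\<Sum>i\<in>F. a i * fs i x)"
    unfolding beurling_op_def using assms by simp
qed

lemma fin_props:
  assumes "finite F" "F \<subseteq> I" "\<And>i. i \<in> F \<Longrightarrow> \<bar>a i\<bar> \<le> 1"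
  shows "(\<lambda>x. \<Sum>i\<in>F. a i * fs i x) \<in> Lip0 z" "lipnorm (\<lambda>x. \<Sum>i\<in>F. a i * fs i x) \<le> max M 0"
proof -
  have b: "\<bar>(if i \<in> F then a i else 0)\<bar> \<le> 1" if "i \<in> I" for i using assms(3) by auto
  show "(\<lambda>x. \<Sum>i\<in>F. a i * fs i x) \<in> Lip0 z"
    using R_props(1)[of "\<lambda>i. if i \<in> F then a i else 0" 1] b R_fin[OF assms(1,2), of a] by simp
  show "lipnorm (\<lambda>x. \<Sum>i\<in>F. a i * fs i x) \<le> max M 0"
    using R_props(2)[of "\<lambda>i. if i \<in> F then a i else 0" 1] b R_fin[OF assms(1,2), of a] by simp
qed

lemma fs_Lip0: "i \<in> I \<Longrightarrow> fs i \<in> Lip0 z"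
  using fin_props(1)[of "{i}" "\<lambda>_. 1"] by simp

lemma R_Lip0: "\<alpha> \<in> linf I \<Longrightarrow> beurling_op I fs \<alpha> \<in> Lip0 z"
proof -
  assume "\<alpha> \<in> linf I"
  then obtain B0 where B0: "\<And>i. i \<in> I \<Longrightarrow> \<bar>\<alpha> i\<bar> \<le> B0" unfolding linf_def by auto
  have "\<And>i. i \<in> I \<Longrightarrow> \<bar>\<alpha> i\<bar> \<le> max B0 0" using B0 by (auto simp: max.coboundedI1)
  then show ?thesis using R_props(1)[of \<alpha> "max B0 0"] by simp
qed

lemma phi_rep:
  assumes phi: "\<phi> \<in> free_space z"
  defines "\<beta> \<equiv> (\<lambda>i. if i \<in> I then \<phi> (fs i) else 0)"
  shows "\<beta> \<in> l1 I" "\<And>\<alpha>. \<alpha> \<in> linf I \<Longrightarrow> \<phi> (beurling_op I fs \<alpha>) = infsum (\<lambda>i. \<alpha> i * \<beta> i) I"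
proof -
  obtain C where C: "C \<ge> 0" "\<And>f. f \<in> Lip0 z \<Longrightarrow> \<bar>\<phi> f\<bar> \<le> C * lipnorm f"
    using free_bounded[OF phi] by blast
  have lin: "\<phi> (\<lambda>x. \<Sum>i\<in>F. a i * fs i x) = (\<Sum>i\<in>F. a i * \<phi> (fs i))"
    if "finite F" "F \<subseteq> I" "\<And>i. i \<in> F \<Longrightarrow> \<bar>a i\<bar> \<le> 1" for F a
    by (rule free_linear[OF phi that(1)]) (use that fs_Lip0 fin_props(1)[OF that] in auto)
  have absb: "(\<lambda>i. \<bar>\<beta> i\<bar>) summable_on I"
  proof (rule nonneg_bdd_above_summable_on)
    show "bdd_above (sum (\<lambda>i. \<bar>\<beta> i\<bar>) ` {F. F \<subseteq> I \<and> finite F})"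
    proof (rule bdd_aboveI2)
      fix F assume F: "F \<in> {F. F \<subseteq> I \<and> finite F}"
      let ?a = "\<lambda>i. sgn (\<phi> (fs i))"
      have a1: "\<And>i. i \<in> F \<Longrightarrow> \<bar>?a i\<bar> \<le> 1" by (rule sgn_abs_real(2))
      have "sum (\<lambda>i. \<bar>\<beta> i\<bar>) F = (\<Sum>i\<in>F. ?a i * \<phi> (fs i))"
        using F by (intro sum.cong) (auto simp: \<beta>_def sgn_abs_real)
      also have "\<dots> = \<phi> (\<lambda>x. \<Sum>i\<in>F. ?a i * fs i x)" using lin[of F ?a] F a1 by auto
      also have "\<dots> \<le> C * lipnorm (\<lambda>x. \<Sum>i\<in>F. ?a i * fs i x)"
        using C(2)[OF fin_props(1)[of F ?a]] F a1 by fastforce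
      also have "\<dots> \<le> C * max M 0"
        using mult_left_mono[OF fin_props(2)[of F ?a] C(1)] F a1 by fastforce
      finally show "sum (\<lambda>i. \<bar>\<beta> i\<bar>) F \<le> C * max M 0" .
    qed
  qed simp
  then show "\<beta> \<in> l1 I" unfolding l1_def \<beta>_def by auto
  have bsum: "\<beta> summable_on I" using absb by (simp add: abs_summable_real)
  fix \<alpha> assume "\<alpha> \<in> linf I"
  then obtain B0 where B0: "\<And>i. i \<in> I \<Longrightarrow> \<bar>\<alpha> i\<bar> \<le> B0" unfolding linf_def by auto
  define B where "B = max B0 0"
  have B: "\<And>i. i \<in> I \<Longrightarrow> \<bar>\<alpha> i\<bar> \<le> B" "B \<ge> 0" using B0 by (auto simp: B_def max.coboundedI1)
  define K where "K = 2 * B * max M 0"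
  have K: "K \<ge> 0" using B(2) by (simp add: K_def)
  have "\<phi> (beurling_op I fs \<alpha>) - infsum (\<lambda>i. \<alpha> i * \<beta> i) I = 0"
  proof (rule zero_by_eps[OF _ K])
    fix e :: real assume e: "e > 0"
    obtain S c where S: "finite S"
      "\<And>f. f \<in> Lip0 z \<Longrightarrow> \<bar>\<phi> f - (\<Sum>x\<in>S. c x * f x)\<bar> \<le> e * lipnorm f"
      using phi e unfolding free_space_def by blast
    define \<psi> where "\<psi> = (\<lambda>i. \<Sum>x\<in>S. c x * fs i x)"
    have psum: "\<psi> summable_on I"
      unfolding \<psi>_def using infsum_sum_swap[OF S(1), of "\<lambda>x i. c x * fs i x" I]
        summable_on_cmult_right[OF fsumm] by blast
    have psiR: "(\<Sum>x\<in>S. c x * beurling_op I fs \<alpha> x) = infsum (\<lambda>i. \<alpha> i * \<psi> i) I"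
    proof -
      have "(\<Sum>x\<in>S. c x * beurling_op I fs \<alpha> x) = (\<Sum>x\<in>S. infsum (\<lambda>i. c x * (\<alpha> i * fs i x)) I)"
        unfolding beurling_op_def by (simp add: infsum_cmult_right[OF bdd_mult_summable[OF fsumm B(1)]])
      also have "\<dots> = infsum (\<lambda>i. \<Sum>x\<in>S. c x * (\<alpha> i * fs i x)) I"
        using infsum_sum_swap[OF S(1), of "\<lambda>x i. c x * (\<alpha> i * fs i x)" I]
          summable_on_cmult_right[OF bdd_mult_summable[OF fsumm B(1)]] by simp
      also have "\<dots> = infsum (\<lambda>i. \<alpha> i * \<psi> i) I"
        unfolding \<psi>_def by (simp add: sum_distrib_left mult.left_commute)
      finally show ?thesis .
    qed
    have dsumm: "(\<lambda>i. \<psi> i - \<beta> i) summable_on I" by (rule infsum_diff_real(1)[OF psum bsum])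
    have eb: "infsum (\<lambda>i. \<bar>\<psi> i - \<beta> i\<bar>) I \<le> e * max M 0"
    proof (rule infsum_le_finite_sums)
      show "(\<lambda>i. \<bar>\<psi> i - \<beta> i\<bar>) summable_on I"
        using dsumm by (simp add: abs_summable_real)
      fix F assume F: "finite F" "F \<subseteq> I"
      let ?a = "\<lambda>i. sgn (\<psi> i - \<beta> i)"
      have a1: "\<And>i. i \<in> F \<Longrightarrow> \<bar>?a i\<bar> \<le> 1" by (rule sgn_abs_real(2))
      define G where "G = (\<lambda>x. \<Sum>i\<in>F. ?a i * fs i x)"
      have G: "G \<in> Lip0 z" "lipnorm G \<le> max M 0" unfolding G_def using fin_props[OF F a1] by auto
      have psiG: "(\<Sum>x\<in>S. c x * G x) = (\<Sum>i\<in>F. ?a i * \<psi> i)"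
      proof -
        have "(\<Sum>x\<in>S. c x * G x) = (\<Sum>x\<in>S. \<Sum>i\<in>F. ?a i * (c x * fs i x))"
          by (simp add: G_def sum_distrib_left mult.left_commute)
        also have "\<dots> = (\<Sum>i\<in>F. \<Sum>x\<in>S. ?a i * (c x * fs i x))" by (rule sum.swap)
        also have "\<dots> = (\<Sum>i\<in>F. ?a i * \<psi> i)" by (simp add: \<psi>_def sum_distrib_left)
        finally show ?thesis .
      qed
      have phiG: "\<phi> G = (\<Sum>i\<in>F. ?a i * \<beta> i)"
      proof -
        have "\<phi> G = (\<Sum>i\<in>F. ?a i * \<phi> (fs i))"
          unfolding G_def by (rule lin[OF F]) (rule sgn_abs_real(2))
        also have "\<dots> = (\<Sum>i\<in>F. ?a i * \<beta> i)"
          by (rule sum.cong) (use F in \<open>auto simp: \<beta>_def\<close>)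
        finally show ?thesis .
      qed
      have "(\<Sum>i\<in>F. \<bar>\<psi> i - \<beta> i\<bar>) = (\<Sum>i\<in>F. ?a i * \<psi> i) - (\<Sum>i\<in>F. ?a i * \<beta> i)"
        by (simp add: sgn_abs_real(1)[symmetric] right_diff_distrib sum_subtractf)
      also have "\<dots> = -(\<phi> G - (\<Sum>x\<in>S. c x * G x))" by (simp add: psiG phiG)
      also have "\<dots> \<le> \<bar>\<phi> G - (\<Sum>x\<in>S. c x * G x)\<bar>" by linarith
      also have "\<dots> \<le> e * lipnorm G" by (rule S(2)[OF G(1)])
      also have "\<dots> \<le> e * max M 0" using G(2) e by simp
      finally show "(\<Sum>i\<in>F. \<bar>\<psi> i - \<beta> i\<bar>) \<le> e * max M 0" .
    qed
    have t1: "\<bar>\<phi> (beurling_op I fs \<alpha>) - infsum (\<lambda>i. \<alpha> i * \<psi> i) I\<bar> \<le> e * (B * max M 0)"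
    proof -
      have "e * lipnorm (beurling_op I fs \<alpha>) \<le> e * (B * max M 0)"
        using R_props(2)[of \<alpha> B, OF B] e by (simp add: mult_left_mono)
      then show ?thesis using S(2)[OF R_props(1)[of \<alpha> B, OF B]] psiR by simp
    qed
    have t2: "\<bar>infsum (\<lambda>i. \<alpha> i * \<psi> i) I - infsum (\<lambda>i. \<alpha> i * \<beta> i) I\<bar> \<le> e * (B * max M 0)"
    proof -
      have "infsum (\<lambda>i. \<alpha> i * \<psi> i) I - infsum (\<lambda>i. \<alpha> i * \<beta> i) I
          = infsum (\<lambda>i. \<alpha> i * \<psi> i - \<alpha> i * \<beta> i) I"
        using infsum_diff_real(2)[OF bdd_mult_summable[OF psum B(1)] bdd_mult_summable[OF bsum B(1)]]
        by simp
      also have "\<dots> = infsum (\<lambda>i. \<alpha> i * (\<psi> i - \<beta> i)) I" by (simp add: right_diff_distrib)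
      finally have eq: "infsum (\<lambda>i. \<alpha> i * \<psi> i) I - infsum (\<lambda>i. \<alpha> i * \<beta> i) I
          = infsum (\<lambda>i. \<alpha> i * (\<psi> i - \<beta> i)) I" .
      have "\<bar>infsum (\<lambda>i. \<alpha> i * (\<psi> i - \<beta> i)) I\<bar> \<le> B * infsum (\<lambda>i. \<bar>\<psi> i - \<beta> i\<bar>) I"
        by (rule abs_infsum_mult_le[OF dsumm B(1)])
      also have "\<dots> \<le> B * (e * max M 0)" by (rule mult_left_mono[OF eb B(2)])
      finally show ?thesis using eq by (simp add: mult_ac)
    qed
    show "\<bar>\<phi> (beurling_op I fs \<alpha>) - infsum (\<lambda>i. \<alpha> i * \<beta> i) I\<bar> \<le> e * K"
      using t1 t2 unfolding K_def by (simp add: algebra_simps)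
  qed
  then show "\<phi> (beurling_op I fs \<alpha>) = infsum (\<lambda>i. \<alpha> i * \<beta> i) I" by simp
qed

end


lemma zero_free: "(\<lambda>_. 0) \<in> free_space z"
  unfolding free_space_def
proof (intro CollectI allI impI)
  fix e :: real assume e: "e > 0"
  show "\<exists>S c. finite S \<and> (\<forall>f\<in>Lip0 z. \<bar>0 - (\<Sum>x\<in>S. c x * f x)\<bar> \<le> e * lipnorm f)"
  proof (rule exI[of _ "{}"], rule exI[of _ "\<lambda>_. 0"], intro conjI ballI)
    fix f :: "'a \<Rightarrow> real" assume "f \<in> Lip0 z"
    then have "lipnorm f \<ge> 0" by (rule lip_bound(2))
    then show "\<bar>0 - (\<Sum>x\<in>{}. (\<lambda>_. 0) x * f x)\<bar> \<le> e * lipnorm f" using e by simp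
  qed simp
qed

theorem theorem3p11:
  fixes z :: "'a::metric_space" and I :: "'i set"
    and xs ys :: "'i \<Rightarrow> 'a" and fs :: "'i \<Rightarrow> 'a \<Rightarrow> real"
  assumes "lip_interpolating z I xs ys"
    and "beurling_set z I xs ys (lip_interp_const z I xs ys) fs"
  shows "continuous_map (weakstar_linf I) (weakstar_Lip0 z) (beurling_op I fs)"
proof -
  interpret beur z I fs "lip_interp_const z I xs ys"
    by unfold_locales (use assms(2) in \<open>auto simp: beurling_set_def\<close>)
  define SL where "SL = {{\<alpha> \<in> linf I. (\<Sum>\<^sub>\<infinity>i\<in>I. \<alpha> i * \<beta> i) \<in> U} | \<beta> U. \<beta> \<in> l1 I \<and> open U}"
  define SF where "SF = {{f \<in> Lip0 z. \<phi> f \<in> U} | (\<phi> :: ('a \<Rightarrow> real) \<Rightarrow> real) U. \<phi> \<in> free_space z \<and> open U}"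
  have WL: "weakstar_linf I = topology_generated_by SL" unfolding weakstar_linf_def SL_def ..
  have WF: "weakstar_Lip0 z = topology_generated_by SF" unfolding weakstar_Lip0_def SF_def ..
  have z0: "(\<lambda>_. 0) \<in> l1 I" by (simp add: l1_def)
  have "{\<alpha> \<in> linf I. (\<Sum>\<^sub>\<infinity>i\<in>I. \<alpha> i * 0) \<in> UNIV} \<in> SL" unfolding SL_def using z0 by blast
  then have "linf I \<in> SL" by simp
  then have tL: "topspace (weakstar_linf I) = linf I" unfolding WL SL_def by auto
  show ?thesis unfolding WF
  proof (rule continuous_map_generated)
    fix \<alpha> assume "\<alpha> \<in> topspace (weakstar_linf I)"
    then have R: "beurling_op I fs \<alpha> \<in> Lip0 z" using tL R_Lip0 by auto
    have "{f \<in> Lip0 z. (\<lambda>_. 0::real) f \<in> UNIV} \<in> SF" unfolding SF_def using zero_free by blast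
    then show "beurling_op I fs \<alpha> \<in> \<Union>SF" using R by auto
  next
    fix s assume "s \<in> SF"
    then obtain \<phi> U where s: "s = {f \<in> Lip0 z. \<phi> f \<in> U}" "\<phi> \<in> free_space z" "open U"
      unfolding SF_def by blast
    define \<beta> where "\<beta> = (\<lambda>i. if i \<in> I then \<phi> (fs i) else 0)"
    have b: "\<beta> \<in> l1 I" "\<And>\<alpha>. \<alpha> \<in> linf I \<Longrightarrow> \<phi> (beurling_op I fs \<alpha>) = infsum (\<lambda>i. \<alpha> i * \<beta> i) I"
      using phi_rep[OF s(2)] unfolding \<beta>_def by auto
    have eq: "{\<alpha> \<in> topspace (weakstar_linf I). beurling_op I fs \<alpha> \<in> s}
        = {\<alpha> \<in> linf I. (\<Sum>\<^sub>\<infinity>i\<in>I. \<alpha> i * \<beta> i) \<in> U}"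
      unfolding tL s(1) using b(2) R_Lip0 by auto
    have "{\<alpha> \<in> linf I. (\<Sum>\<^sub>\<infinity>i\<in>I. \<alpha> i * \<beta> i) \<in> U} \<in> SL" unfolding SL_def using b(1) s(3) by blast
    then have "openin (weakstar_linf I) {\<alpha> \<in> linf I. (\<Sum>\<^sub>\<infinity>i\<in>I. \<alpha> i * \<beta> i) \<in> U}"
      unfolding WL by (rule topology_generated_by_Basis)
    then show "openin (weakstar_linf I) {\<alpha> \<in> topspace (weakstar_linf I). beurling_op I fs \<alpha> \<in> s}"
      unfolding eq .
  qed
qed

end
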